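(* Let $m \ge 0$ be an integer and let $\tau, \tau' \in S_{2m+1}$ be independent uniformly random permutations, each of cycle type $1^1 2^m$ (one fixed point and $m$ two-cycles). Then the probability that $\langle \tau, \tau'\rangle$ is transitive on $\{1,\dots,2m+1\}$ equals \[ \frac{(2m+1)!}{\big((2m+1)!/(2^m m!)\big)^2}. \] Let $m \ge 1$. If $\tau,\tau' \in S_{2m}$ are independent uniformly random with $\tau$ of cycle type $1^2 2^{m-1}$ and $\tau'$ of cycle type $2^m$, then the probability that $\langle\tau,\tau'\rangle$ is transitive equals \[ \frac{(2m)!/2}{\big((2m)!/(2^{m-1}\,2!\,(m-1)!)\big)\cdot\big((2m)!/(2^m m!)\big)}. \] If $\tau,\tau' \in S_{2m}$ are independent uniformly random, both of cycle type $2^m$, then the probability that $\langle\tau,\tau'\rangle$ is transitive equals \[ \frac{(2m-1)!}{\big((2m)!/(2^m m!)\big)^2}. \]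
   Context: Cycle type $1^{d_1}2^{d_2}$ means $d_1$ fixed points and $d_2$ two-cycles. *)

theory Defs
  imports Complex_Main "HOL-Combinatorics.Permutations"
begin

text \<open>Permutations of S of cycle type 1^d1 2^d2: d1 fixed points and d2 two-cycles
  (and no other cycles, i.e. the permutation is an involution).\<close>
definition cycle_type_1_2 :: "nat set \<Rightarrow> nat \<Rightarrow> nat \<Rightarrow> (nat \<Rightarrow> nat) \<Rightarrow> bool" where
  "cycle_type_1_2 S d1 d2 p \<longleftrightarrow>
     p permutes S \<and> (\<forall>x. p (p x) = x) \<and>
     card {x\<in>S. p x = x} = d1 \<and> card {x\<in>S. p x \<noteq> x} = 2 * d2"

definition perms_of_type :: "nat set \<Rightarrow> nat \<Rightarrow> nat \<Rightarrow> (nat \<Rightarrow> nat) set" where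
  "perms_of_type S d1 d2 = {p. cycle_type_1_2 S d1 d2 p}"

inductive_set gen_group :: "(nat \<Rightarrow> nat) \<Rightarrow> (nat \<Rightarrow> nat) \<Rightarrow> (nat \<Rightarrow> nat) set"
  for s t :: "nat \<Rightarrow> nat" where
  gen_id: "id \<in> gen_group s t"
| gen_s: "g \<in> gen_group s t \<Longrightarrow> s \<circ> g \<in> gen_group s t"
| gen_t: "g \<in> gen_group s t \<Longrightarrow> t \<circ> g \<in> gen_group s t"
| gen_s_inv: "g \<in> gen_group s t \<Longrightarrow> inv s \<circ> g \<in> gen_group s t"
| gen_t_inv: "g \<in> gen_group s t \<Longrightarrow> inv t \<circ> g \<in> gen_group s t"

definition transitive_on :: "nat set \<Rightarrow> (nat \<Rightarrow> nat) \<Rightarrow> (nat \<Rightarrow> nat) \<Rightarrow> bool" where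
  "transitive_on S s t \<longleftrightarrow> (\<forall>x\<in>S. \<forall>y\<in>S. \<exists>g\<in>gen_group s t. g x = y)"

definition trans_prob :: "nat set \<Rightarrow> (nat \<Rightarrow> nat) set \<Rightarrow> (nat \<Rightarrow> nat) set \<Rightarrow> real" where
  "trans_prob S A B =
     real (card {(s, t). s \<in> A \<and> t \<in> B \<and> transitive_on S s t}) / real (card (A \<times> B))"

end

theory Submission
  imports Defs "HOL-Combinatorics.Multiset_Permutations"
begin


lemma gen_comp: "g \<in> gen_group s t \<Longrightarrow> h \<in> gen_group s t \<Longrightarrow> g \<circ> h \<in> gen_group s t"
proof (induction rule: gen_group.induct)
  case gen_id then show ?case by simp
next
  case (gen_s g) then show ?case using gen_group.gen_s[of "g \<circ> h" s t] by (simp only: o_assoc)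
next
  case (gen_t g) then show ?case using gen_group.gen_t[of "g \<circ> h" s t] by (simp only: o_assoc)
next
  case (gen_s_inv g) then show ?case using gen_group.gen_s_inv[of "g \<circ> h" s t] by (simp only: o_assoc)
next
  case (gen_t_inv g) then show ?case using gen_group.gen_t_inv[of "g \<circ> h" s t] by (simp only: o_assoc)
qed

lemma gen_s': "s \<in> gen_group s t" using gen_s[OF gen_id] by simp
lemma gen_t': "t \<in> gen_group s t" using gen_t[OF gen_id] by simp

lemma gen_inv:
  assumes "g \<in> gen_group s t" "\<And>x. s (s x) = x" "\<And>x. t (t x) = x"
  shows "\<exists>h\<in>gen_group s t. \<forall>z. h (g z) = z"
  using assms(1)
proof (induction rule: gen_group.induct)
  case gen_id then show ?case by (intro bexI[of _ id] gen_group.gen_id) auto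
next
  case (gen_s g)
  then obtain h where h: "h \<in> gen_group s t" "\<forall>z. h (g z) = z" by blast
  show ?case by (intro bexI[of _ "h \<circ> s"] gen_comp h(1) gen_s') (auto simp: assms h)
next
  case (gen_t g)
  then obtain h where h: "h \<in> gen_group s t" "\<forall>z. h (g z) = z" by blast
  show ?case by (intro bexI[of _ "h \<circ> t"] gen_comp h(1) gen_t') (auto simp: assms h)
next
  case (gen_s_inv g)
  then obtain h where h: "h \<in> gen_group s t" "\<forall>z. h (g z) = z" by blast
  have "inv s = s" using assms(2) by (metis inv_equality)
  then show ?case by (intro bexI[of _ "h \<circ> s"] gen_comp h(1) gen_s') (auto simp: assms h)
next
  case (gen_t_inv g)
  then obtain h where h: "h \<in> gen_group s t" "\<forall>z. h (g z) = z" by blast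
  have "inv t = t" using assms(3) by (metis inv_equality)
  then show ?case by (intro bexI[of _ "h \<circ> t"] gen_comp h(1) gen_t') (auto simp: assms h)
qed

lemma gen_closed:
  assumes "g \<in> gen_group s t" "\<And>x. s (s x) = x" "\<And>x. t (t x) = x"
    "\<And>z. z \<in> C \<Longrightarrow> s z \<in> C" "\<And>z. z \<in> C \<Longrightarrow> t z \<in> C"
  shows "\<forall>z\<in>C. g z \<in> C"
proof -
  have hs: "inv s = s" using assms(2) by (metis inv_equality)
  have it: "inv t = t" using assms(3) by (metis inv_equality)
  show ?thesis using assms(1)
    by (induction rule: gen_group.induct) (auto simp: assms(4,5) hs it)
qed

fun walk :: "(nat \<Rightarrow> nat) \<Rightarrow> (nat \<Rightarrow> nat) \<Rightarrow> nat \<Rightarrow> nat \<Rightarrow> nat" where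
  "walk a b x0 0 = x0"
| "walk a b x0 (Suc k) = (if even k then a else b) (walk a b x0 k)"

lemma walk_in_gen:
  assumes "a = s \<and> b = t \<or> a = t \<and> b = s"
  shows "\<exists>g\<in>gen_group s t. g x0 = walk a b x0 k"
proof (induction k)
  case 0 then show ?case by (intro bexI[of _ id] gen_group.gen_id) auto
next
  case (Suc k)
  then obtain g where g: "g \<in> gen_group s t" "g x0 = walk a b x0 k" by blast
  show ?case
  proof (cases "(if even k then a else b) = s")
    case True then show ?thesis by (intro bexI[of _ "s \<circ> g"] gen_s g(1)) (auto simp: g)
  next
    case False
    then have "(if even k then a else b) = t" using assms by auto
    then show ?thesis by (intro bexI[of _ "t \<circ> g"] gen_t g(1)) (auto simp: g)
  qed
qed

lemma transitive_from_walk: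
  assumes "a = s \<and> b = t \<or> a = t \<and> b = s" "\<And>x. s (s x) = x" "\<And>x. t (t x) = x"
    "S \<subseteq> range (walk a b x0)"
  shows "transitive_on S s t"
  unfolding transitive_on_def
proof (intro ballI)
  fix x y assume xy: "x \<in> S" "y \<in> S"
  obtain i where "x = walk a b x0 i" using assms(4) xy by auto
  then obtain g1 where g1: "g1 \<in> gen_group s t" "g1 x0 = x" using walk_in_gen[OF assms(1)] by blast
  obtain j where "y = walk a b x0 j" using assms(4) xy by auto
  then obtain g2 where g2: "g2 \<in> gen_group s t" "g2 x0 = y" using walk_in_gen[OF assms(1)] by blast
  obtain h where h: "h \<in> gen_group s t" "\<forall>z. h (g1 z) = z" using gen_inv[OF g1(1) assms(2,3)] by blast
  show "\<exists>g\<in>gen_group s t. g x = y"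
    by (intro bexI[of _ "g2 \<circ> h"] gen_comp g2(1) h(1)) (auto simp: g1(2)[symmetric] h g2)
qed

lemma walk_back:
  assumes "\<And>x. a (a x) = x" "\<And>x. b (b x) = x"
  shows "(if even k then a else b) (walk a b x0 (Suc k)) = walk a b x0 k"
  using assms by auto



fun pp :: "nat list \<Rightarrow> nat \<Rightarrow> nat" where
  "pp (x#y#r) = (\<lambda>z. if z = x then y else if z = y then x else pp r z)"
| "pp _ = id"

lemma pp_out: "z \<notin> set L \<Longrightarrow> pp L z = z"
  by (induction L rule: pp.induct) auto

lemma pp_in: "z \<in> set L \<Longrightarrow> pp L z \<in> set L"
  by (induction L rule: pp.induct) auto

lemma pp_invol: "distinct L \<Longrightarrow> pp L (pp L z) = z"
proof (induction L rule: pp.induct)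
  case (1 x y r)
  show ?case
  proof (cases "z \<in> set r")
    case True
    then have "pp r z \<in> set r" by (rule pp_in)
    then show ?thesis using 1 True by auto
  next
    case False
    then show ?thesis using 1 by (auto simp: pp_out)
  qed
qed auto

lemma pp_nth: "distinct L \<Longrightarrow> k < length L \<Longrightarrow>
  pp L (L!k) = (if even k then (if Suc k < length L then L!(Suc k) else L!k) else L!(k-1))"
proof (induction L arbitrary: k rule: pp.induct)
  case (1 x y r)
  show ?case
  proof (cases k)
    case 0 then show ?thesis by simp
  next
    case (Suc k1)
    show ?thesis
    proof (cases k1)
      case 0 then show ?thesis using 1 Suc by auto
    next
      case (Suc k2)
      have k: "k = Suc (Suc k2)" using Suc \<open>k = Suc k1\<close> by simp
      have lt: "k2 < length r" using 1(3) k by simp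
      have "r ! k2 \<in> set r" using lt by simp
      then have ne: "r!k2 \<noteq> x" "r!k2 \<noteq> y" using 1(2) by auto
      have ih: "pp r (r!k2) = (if even k2 then (if Suc k2 < length r then r!(Suc k2) else r!k2) else r!(k2-1))"
        using 1(1)[of "r!k2" k2] ne lt 1(2) by auto
      show ?thesis
      proof (cases k2)
        case 0 then show ?thesis using k ne ih by auto
      next
        case (Suc k3) then show ?thesis using k ne ih by auto
      qed
    qed
  qed
next
  case ("2_2" v)
  then show ?case by simp
qed simp

lemma pp_permutes: "distinct L \<Longrightarrow> pp L permutes set L"
  unfolding permutes_def
proof (intro conjI allI impI)
  fix x assume "x \<notin> set L" then show "pp L x = x" by (rule pp_out)
next
  fix y assume d: "distinct L"
  show "\<exists>!x. pp L x = y"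
  proof (rule ex1I[of _ "pp L y"])
    show "pp L (pp L y) = y" using d by (rule pp_invol)
    fix x assume "pp L x = y"
    then show "x = pp L y" using pp_invol[OF d, of x] by simp
  qed
qed

lemma pp_fix: assumes "distinct L"
  shows "{z \<in> set L. pp L z = z} = (if odd (length L) then {last L} else {})"
proof -
  have "z \<in> set L \<and> pp L z = z \<longleftrightarrow> odd (length L) \<and> z = last L" for z
  proof
    assume h: "z \<in> set L \<and> pp L z = z"
    then obtain k where k: "k < length L" "z = L!k" by (auto simp: in_set_conv_nth)
    have "even k \<and> \<not> Suc k < length L"
    proof (rule ccontr)
      assume "\<not> (even k \<and> \<not> Suc k < length L)"
      moreover have "odd k \<Longrightarrow> k - 1 \<noteq> k" by (cases k) auto
      ultimately have "pp L (L!k) \<noteq> L!k" using pp_nth[OF assms k(1)] k(1) assms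
        by (auto simp: nth_eq_iff_index_eq)
      then show False using h k by simp
    qed
    then have kk: "k = length L - 1" using k(1) by auto
    then have "length L = Suc k" using k(1) by simp
    then have "odd (length L)" using \<open>even k \<and> _\<close> by simp
    note kk this
    moreover have "L \<noteq> []" using k(1) by auto
    ultimately show "odd (length L) \<and> z = last L" using k kk by (simp add: last_conv_nth)
  next
    assume h: "odd (length L) \<and> z = last L"
    then have ne: "L \<noteq> []" by auto
    have "pp L (L!(length L - 1)) = L!(length L - 1)" using pp_nth[OF assms, of "length L - 1"] h ne
      by auto
    then show "z \<in> set L \<and> pp L z = z" using h ne by (simp add: last_conv_nth)
  qed
  then show ?thesis by auto
qed



lemma walk_in_S: "a permutes S \<Longrightarrow> b permutes S \<Longrightarrow> x0 \<in> S \<Longrightarrow> walk a b x0 k \<in> S"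
  by (induction k) (auto simp: permutes_in_image)

lemma walk_repeat:
  fixes a b :: "nat \<Rightarrow> nat" and x0 :: nat
  defines "x \<equiv> walk a b x0"
  assumes ia: "\<And>z. a (a z) = z" and ib: "\<And>z. b (b z) = z"
    and pa: "a permutes S" and pb: "b permutes S" and fin: "finite S" and x0: "x0 \<in> S"
  obtains j where "j > 0" "inj_on x {..<j}" "x j \<in> x ` {..<j}"
    "x j = x (j-1) \<or> (x j = x0 \<and> even j)"
proof -
  define P where "P j \<longleftrightarrow> x j \<in> x ` {..<j}" for j
  have "range x \<subseteq> S" using walk_in_S[OF pa pb x0] unfolding x_def by auto
  then have "finite (range x)" using fin finite_subset by blast
  then have "\<not> inj x" using finite_imageD infinite_UNIV_nat by blast
  then obtain p q where pq: "p \<noteq> q" "x p = x q" unfolding inj_def by blast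
  have "\<exists>j. P j"
  proof (cases "p < q")
    case True then have "x q \<in> x ` {..<q}" using pq by (metis imageI lessThan_iff)
    then show ?thesis unfolding P_def by blast
  next
    case False then have "x p \<in> x ` {..<p}" using pq by (metis imageI lessThan_iff linorder_neqE_nat)
    then show ?thesis unfolding P_def by blast
  qed
  define j where "j = (LEAST j. P j)"
  have Pj: "P j" unfolding j_def using \<open>\<exists>j. P j\<close> by (metis LeastI_ex)
  have nP: "\<not> P k" if "k < j" for k using that unfolding j_def by (rule not_less_Least)
  have inj: "inj_on x {..<j}"
  proof (rule inj_onI)
    fix p q assume h: "p \<in> {..<j}" "q \<in> {..<j}" "x p = x q"
    show "p = q"
    proof (rule ccontr)
      assume "p \<noteq> q"
      then have "p < q \<or> q < p" by auto
      then show False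
      proof
        assume "p < q" then have "P q" using h unfolding P_def by (metis image_eqI lessThan_iff)
        then show False using nP h by auto
      next
        assume "q < p" then have "P p" using h unfolding P_def by (metis image_eqI lessThan_iff)
        then show False using nP h by auto
      qed
    qed
  qed
  have "j \<noteq> 0" using Pj unfolding P_def by auto
  then obtain j' where j': "j = Suc j'" by (cases j) auto
  obtain i where i: "i < j" "x j = x i" using Pj unfolding P_def by auto
  define step where "step k = (if even k then a else b)" for k :: nat
  have fw: "x (Suc k) = step k (x k)" for k unfolding x_def step_def by simp
  have bw: "step k (x (Suc k)) = x k" for k unfolding x_def step_def using ia ib by simp
  have xj': "x j' = step j' (x i)" using bw[of j'] i j' by simp
  have "x j = x (j-1) \<or> (x j = x0 \<and> even j)"
  proof (cases "i = j'")
    case True then show ?thesis using i j' by simp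
  next
    case False
    then have ij: "i < j'" using i j' by simp
    show ?thesis
    proof (cases "even i = even j'")
      case True
      then have "step j' = step i" unfolding step_def by simp
      then have "x j' = x (Suc i)" using xj' fw by simp
      moreover have "Suc i < j'" using ij True by (metis Suc_lessI even_Suc)
      moreover have "j' \<in> {..<j}" "Suc i \<in> {..<j}" using j' \<open>Suc i < j'\<close> by auto
      ultimately have False using inj_onD[OF inj] by fastforce
      then show ?thesis ..
    next
      case False
      show ?thesis
      proof (cases i)
        case 0 then show ?thesis using False i j' x_def by simp
      next
        case (Suc i')
        then have "step j' = step i'" using False unfolding step_def by simp
        then have "x j' = x i'" using xj' bw Suc by simp
        moreover have "i' < j'" using Suc ij by simp
        moreover have "j' \<in> {..<j}" "i' \<in> {..<j}" using j' \<open>i' < j'\<close> by auto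
        ultimately have False using inj_onD[OF inj] by fastforce
        then show ?thesis ..
      qed
    qed
  qed
  then show ?thesis using that[of j] \<open>j \<noteq> 0\<close> inj Pj unfolding P_def by auto
qed

lemma walk_closed:
  fixes a b :: "nat \<Rightarrow> nat" and x0 :: nat
  defines "x \<equiv> walk a b x0"
  assumes ia: "\<And>z. a (a z) = z" and ib: "\<And>z. b (b z) = z"
    and xj: "x j \<in> x ` {..<j}" and b0: "b x0 \<in> x ` {..<j}" and z: "z \<in> x ` {..<j}"
  shows "a z \<in> x ` {..<j} \<and> b z \<in> x ` {..<j}"
proof -
  obtain k where k: "k < j" "z = x k" using z by auto
  define step where "step k = (if even k then a else b)" for k :: nat
  have fw: "x (Suc k) = step k (x k)" for k unfolding x_def step_def by simp
  have bw: "step k (x (Suc k)) = x k" for k unfolding x_def step_def using ia ib by simp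
  have s1: "step k z \<in> x ` {..<j}"
  proof (cases "Suc k < j")
    case True then show ?thesis using fw[of k] k by force
  next
    case False then have "Suc k = j" using k by simp
    then show ?thesis using fw[of k] k xj by simp
  qed
  show ?thesis
  proof (cases k)
    case 0 then show ?thesis using s1 b0 k unfolding step_def x_def by simp
  next
    case (Suc k')
    have "step k' z \<in> x ` {..<j}" using bw[of k'] k Suc by force
    then show ?thesis using s1 Suc unfolding step_def by (auto split: if_splits)
  qed
qed

lemma walk_main:
  fixes a b s t :: "nat \<Rightarrow> nat" and x0 :: nat and S :: "nat set"
  defines "x \<equiv> walk a b x0"
  defines "n \<equiv> card S"
  assumes ia: "\<And>z. a (a z) = z" and ib: "\<And>z. b (b z) = z"
    and pa: "a permutes S" and pb: "b permutes S" and fin: "finite S" and x0: "x0 \<in> S"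
    and ab: "a = s \<and> b = t \<or> a = t \<and> b = s" and tr: "transitive_on S s t"
    and cond: "b x0 = x0 \<or> (\<forall>z\<in>S. a z \<noteq> z \<and> b z \<noteq> z)"
  shows "inj_on x {..<n}" "x ` {..<n} = S"
    "b x0 = x0 \<Longrightarrow> x n = x (n-1)"
    "(\<forall>z\<in>S. a z \<noteq> z \<and> b z \<noteq> z) \<Longrightarrow> x n = x0 \<and> even n"
proof -
  obtain j where j: "j > 0" "inj_on x {..<j}" "x j \<in> x ` {..<j}"
    "x j = x (j-1) \<or> (x j = x0 \<and> even j)"
    using walk_repeat[OF ia ib pa pb fin x0] unfolding x_def by blast
  define step where "step k = (if even k then a else b)" for k :: nat
  have fw: "x (Suc k) = step k (x k)" for k unfolding x_def step_def by simp
  have bw: "step k (x (Suc k)) = x k" for k unfolding x_def step_def using ia ib by simp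
  obtain j' where j': "j = Suc j'" using j(1) by (cases j) auto
  have inS: "x k \<in> S" for k unfolding x_def by (rule walk_in_S[OF pa pb x0])
  have case2: "b (x j') = x0" if "x j = x0 \<and> even j"
  proof -
    have "step j' = b" using that j' unfolding step_def by simp
    then show ?thesis using fw[of j'] that j' by simp
  qed
  have nf: "x j \<noteq> x (j-1)" if "\<forall>z\<in>S. a z \<noteq> z \<and> b z \<noteq> z"
    using that fw[of j'] j' inS[of j'] unfolding step_def by (auto split: if_splits)
  have b0: "b x0 \<in> x ` {..<j}"
  proof (cases "b x0 = x0")
    case True then show ?thesis using j(1) unfolding x_def by force
  next
    case False
    then have "x j = x0 \<and> even j" using cond nf j(4) by blast
    then have "b x0 = x j'" using case2 ib by metis
    then show ?thesis using j' by auto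
  qed
  have cl: "a z \<in> x ` {..<j} \<and> b z \<in> x ` {..<j}" if "z \<in> x ` {..<j}" for z
    using walk_closed[OF ia ib j(3)[unfolded x_def] b0[unfolded x_def]] that unfolding x_def
    by blast
  have sub: "S \<subseteq> x ` {..<j}"
  proof
    fix y assume y: "y \<in> S"
    obtain g where g: "g \<in> gen_group s t" "g x0 = y" using tr y x0 unfolding transitive_on_def
      by blast
    have cla: "\<And>z. z \<in> x ` {..<j} \<Longrightarrow> a z \<in> x ` {..<j}"
     and clb: "\<And>z. z \<in> x ` {..<j} \<Longrightarrow> b z \<in> x ` {..<j}" using cl by auto
    have "\<forall>z\<in>x ` {..<j}. g z \<in> x ` {..<j}"
    proof (cases "a = s \<and> b = t")
      case True then show ?thesis using gen_closed[OF g(1), of "x ` {..<j}"] ia ib cla clb by simp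
    next
      case False then have "a = t \<and> b = s" using ab by blast
      then show ?thesis using gen_closed[OF g(1), of "x ` {..<j}"] ia ib cla clb by simp
    qed
    moreover have "x0 \<in> x ` {..<j}" using j(1) unfolding x_def by force
    ultimately show "y \<in> x ` {..<j}" using g by auto
  qed
  have eqS: "x ` {..<j} = S" using sub inS by auto
  have "j = n" unfolding n_def using eqS[symmetric] card_image[OF j(2)] by simp
  show "inj_on x {..<n}" using j(2) \<open>j = n\<close> by simp
  show "x ` {..<n} = S" using eqS \<open>j = n\<close> by simp
  show "x n = x (n-1)" if "b x0 = x0"
  proof -
    have False if h: "x j = x0 \<and> even j"
    proof -
      have "b (x j') = x0" using case2 h by blast
      then have "x j' = x 0" using \<open>b x0 = x0\<close> ib unfolding x_def by (metis walk.simps(1))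
      moreover have "j' \<in> {..<j}" "0 \<in> {..<j}" using j' by auto
      ultimately have "j' = 0" using inj_onD[OF j(2)] by blast
      then show False using h j' by simp
    qed
    then show ?thesis using j(4) \<open>j = n\<close> by blast
  qed
  show "x n = x0 \<and> even n" if "\<forall>z\<in>S. a z \<noteq> z \<and> b z \<noteq> z"
    using nf[OF that] j(4) \<open>j = n\<close> by blast
qed



lemma type_iff: "p \<in> perms_of_type S d1 d2 \<longleftrightarrow> p permutes S \<and> (\<forall>x. p (p x) = x) \<and>
   card {x\<in>S. p x = x} = d1 \<and> card {x\<in>S. p x \<noteq> x} = 2*d2"
  by (simp add: perms_of_type_def cycle_type_1_2_def)

lemma invol_permutes:
  assumes "\<And>z. q (q z) = z" "\<And>z. z \<notin> S \<Longrightarrow> q z = z"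
  shows "q permutes S"
  unfolding permutes_def
proof (intro conjI allI impI)
  fix x assume "x \<notin> S" then show "q x = x" by (rule assms(2))
next
  fix y show "\<exists>!x. q x = y"
    by (rule ex1I[of _ "q y"]) (use assms(1) in metis)+
qed

lemma type_finite: "finite S \<Longrightarrow> finite (perms_of_type S d1 d2)"
  by (rule finite_subset[OF _ finite_permutations[of S]]) (auto simp: type_iff)

lemma T0_eq:
  assumes "a \<in> S" "finite S" "d1 \<ge> 1"
  shows "{p \<in> perms_of_type S d1 d2. p a = a} = perms_of_type (S-{a}) (d1-1) d2"
proof -
  have "p \<in> perms_of_type S d1 d2 \<and> p a = a \<longleftrightarrow> p \<in> perms_of_type (S-{a}) (d1-1) d2" for p
  proof -
    have perm: "p permutes S \<and> p a = a \<longleftrightarrow> p permutes (S - {a})"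
    proof
      assume "p permutes S \<and> p a = a"
      then show "p permutes (S - {a})" unfolding permutes_def by auto
    next
      assume h: "p permutes (S - {a})"
      show "p permutes S \<and> p a = a"
        using permutes_subset[OF h, of S] permutes_not_in[OF h, of a] by auto
    qed
    have f: "{x\<in>S. p x = x} = insert a {x\<in>S-{a}. p x = x}" if "p a = a" using that assms by auto
    have nf: "{x\<in>S. p x \<noteq> x} = {x\<in>S-{a}. p x \<noteq> x}" if "p a = a" using that by auto
    have c: "card {x\<in>S. p x = x} = Suc (card {x\<in>S-{a}. p x = x})" if "p a = a"
      using f[OF that] assms(2) by simp
    show ?thesis
    proof
      assume h: "p \<in> perms_of_type S d1 d2 \<and> p a = a"
      then show "p \<in> perms_of_type (S-{a}) (d1-1) d2" using perm c nf unfolding type_iff by auto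
    next
      assume h: "p \<in> perms_of_type (S-{a}) (d1-1) d2"
      then have pa: "p a = a" unfolding type_iff by (meson Diff_iff insertI1 permutes_not_in)
      then show "p \<in> perms_of_type S d1 d2 \<and> p a = a" using h perm c[OF pa] nf[OF pa] assms(3)
        unfolding type_iff by auto
    qed
  qed
  then show ?thesis by blast
qed

lemma T0_empty:
  assumes "a \<in> S" "finite S"
  shows "{p \<in> perms_of_type S 0 d2. p a = a} = {}"
proof -
  have "False" if "p \<in> perms_of_type S 0 d2" "p a = a" for p
  proof -
    have "a \<in> {x\<in>S. p x = x}" using that assms by auto
    moreover have "finite {x\<in>S. p x = x}" using assms by auto
    ultimately have "card {x\<in>S. p x = x} \<noteq> 0" by (metis card_0_eq empty_iff)
    then show False using that unfolding type_iff by simp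
  qed
  then show ?thesis by blast
qed

lemma T1_empty:
  assumes "a \<in> S" "finite S"
  shows "{p \<in> perms_of_type S d1 0. p a \<noteq> a} = {}"
proof -
  have "False" if "p \<in> perms_of_type S d1 0" "p a \<noteq> a" for p
  proof -
    have "a \<in> {x\<in>S. p x \<noteq> x}" using that assms by auto
    moreover have "finite {x\<in>S. p x \<noteq> x}" using assms by auto
    ultimately have "card {x\<in>S. p x \<noteq> x} \<noteq> 0" by (metis card_0_eq empty_iff)
    then show False using that unfolding type_iff by simp
  qed
  then show ?thesis by blast
qed

lemma Tb_card:
  assumes "a \<in> S" "b \<in> S" "a \<noteq> b" "finite S" "d2 \<ge> 1"
  shows "card {p \<in> perms_of_type S d1 d2. p a = b} = card (perms_of_type (S-{a,b}) d1 (d2-1))"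
proof (rule bij_betw_same_card[of "\<lambda>p. transpose a b \<circ> p"], rule bij_betw_byWitness[where f'="\<lambda>p. transpose a b \<circ> p"])
  show "\<forall>p\<in>{p \<in> perms_of_type S d1 d2. p a = b}. transpose a b \<circ> (transpose a b \<circ> p) = p"
    by (auto simp: fun_eq_iff)
  show "\<forall>p\<in>perms_of_type (S-{a,b}) d1 (d2-1). transpose a b \<circ> (transpose a b \<circ> p) = p"
    by (auto simp: fun_eq_iff)
  show "(\<lambda>p. transpose a b \<circ> p) ` {p \<in> perms_of_type S d1 d2. p a = b} \<subseteq> perms_of_type (S-{a,b}) d1 (d2-1)"
  proof (rule image_subsetI)
    fix p assume "p \<in> {p \<in> perms_of_type S d1 d2. p a = b}"
    then have p: "p \<in> perms_of_type S d1 d2" "p a = b" by auto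
    define q where "q = transpose a b \<circ> p"
    have inv: "\<And>z. p (p z) = z" and perm: "p permutes S" and c1: "card {x\<in>S. p x = x} = d1"
      and c2: "card {x\<in>S. p x \<noteq> x} = 2*d2" using p(1) unfolding type_iff by auto
    have pb: "p b = a" using inv[of a] p(2) by simp
    have qo: "q z = p z" if "z \<noteq> a" "z \<noteq> b" for z
    proof -
      have "p z \<noteq> a" using that inv[of z] p(2) by metis
      moreover have "p z \<noteq> b" using that inv[of z] pb by metis
      ultimately show ?thesis unfolding q_def by (simp add: transpose_apply_other)
    qed
    have qa: "q a = a" "q b = b" unfolding q_def using p(2) pb by auto
    have qinv: "q (q z) = z" for z
    proof (cases "z = a \<or> z = b")
      case True then show ?thesis using qa by auto
    next
      case False
      then have "p z \<noteq> a" "p z \<noteq> b" using inv[of z] p(2) pb by metis+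
      then show ?thesis using False qo inv by simp
    qed
    have qout: "q z = z" if "z \<notin> S - {a,b}" for z
    proof (cases "z \<in> S")
      case True then show ?thesis using that qa by auto
    next
      case False
      then have "z \<noteq> a" "z \<noteq> b" using assms(1,2) by auto
      then show ?thesis using qo permutes_not_in[OF perm False] by simp
    qed
    have fab: "x \<noteq> a \<and> x \<noteq> b" if "p x = x" for x using that p(2) pb assms(3) by auto
    have "{x\<in>S-{a,b}. q x = x} = {x\<in>S. p x = x}"
    proof (rule set_eqI)
      fix x show "x \<in> {x\<in>S-{a,b}. q x = x} \<longleftrightarrow> x \<in> {x\<in>S. p x = x}"
        using qo[of x] fab[of x] by auto
    qed
    moreover have "{x\<in>S. p x \<noteq> x} = insert a (insert b {x\<in>S-{a,b}. q x \<noteq> x})"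
      using qo p(2) pb assms by auto
    then have "card {x\<in>S. p x \<noteq> x} = Suc (Suc (card {x\<in>S-{a,b}. q x \<noteq> x}))"
      using assms by simp
    ultimately have "q \<in> perms_of_type (S-{a,b}) d1 (d2-1)" unfolding type_iff
      using invol_permutes[of q "S-{a,b}", OF qinv qout] qinv c1 c2 by auto
    then show "transpose a b \<circ> p \<in> perms_of_type (S-{a,b}) d1 (d2-1)" unfolding q_def .
  qed
  show "(\<lambda>p. transpose a b \<circ> p) ` perms_of_type (S-{a,b}) d1 (d2-1) \<subseteq> {p \<in> perms_of_type S d1 d2. p a = b}"
  proof (rule image_subsetI)
    fix q assume q: "q \<in> perms_of_type (S-{a,b}) d1 (d2-1)"
    define p where "p = transpose a b \<circ> q"
    have inv: "\<And>z. q (q z) = z" and perm: "q permutes S-{a,b}" and c1: "card {x\<in>S-{a,b}. q x = x} = d1"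
      and c2: "card {x\<in>S-{a,b}. q x \<noteq> x} = 2*(d2-1)" using q unfolding type_iff by auto
    have qa: "q a = a" "q b = b" using permutes_not_in[OF perm] by auto
    have po: "p z = q z" if "z \<noteq> a" "z \<noteq> b" for z
    proof -
      have "q z \<noteq> a" using that inv[of z] qa by metis
      moreover have "q z \<noteq> b" using that inv[of z] qa by metis
      ultimately show ?thesis unfolding p_def by (simp add: transpose_apply_other)
    qed
    have pa: "p a = b" "p b = a" unfolding p_def using qa by auto
    have pinv: "p (p z) = z" for z
    proof (cases "z = a \<or> z = b")
      case True then show ?thesis using pa by auto
    next
      case False
      then have "q z \<noteq> a" "q z \<noteq> b" using inv[of z] qa by metis+
      then show ?thesis using False po inv by simp
    qed
    have pout: "p z = z" if "z \<notin> S" for z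
    proof -
      have "z \<noteq> a" "z \<noteq> b" using that assms(1,2) by auto
      moreover have "z \<notin> S - {a,b}" using that by simp
      ultimately show ?thesis using po permutes_not_in[OF perm] by metis
    qed
    have fab: "x \<noteq> a \<and> x \<noteq> b" if "p x = x" for x using that pa assms(3) by auto
    have "{x\<in>S-{a,b}. q x = x} = {x\<in>S. p x = x}"
    proof (rule set_eqI)
      fix x show "x \<in> {x\<in>S-{a,b}. q x = x} \<longleftrightarrow> x \<in> {x\<in>S. p x = x}"
        using po[of x] fab[of x] by auto
    qed
    moreover have "{x\<in>S. p x \<noteq> x} = insert a (insert b {x\<in>S-{a,b}. q x \<noteq> x})"
      using po pa assms by auto
    then have "card {x\<in>S. p x \<noteq> x} = Suc (Suc (card {x\<in>S-{a,b}. q x \<noteq> x}))"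
      using assms by simp
    ultimately have "p \<in> perms_of_type S d1 d2" "p a = b"
      unfolding type_iff
      using invol_permutes[of p S, OF pinv pout] pinv c1 c2 assms(5) pa by auto
    then show "transpose a b \<circ> q \<in> {p \<in> perms_of_type S d1 d2. p a = b}" unfolding p_def by simp
  qed
qed



lemma type_empty: "perms_of_type {} 0 0 = {id}"
proof -
  have "p \<in> perms_of_type {} 0 0 \<longleftrightarrow> p = id" for p
    unfolding type_iff by (auto simp: permutes_empty)
  then show ?thesis by blast
qed

lemma T1_card:
  assumes fin: "finite S" and a: "a \<in> S" and d2: "d2 \<ge> 1"
    and c: "\<And>b. b \<in> S - {a} \<Longrightarrow> card (perms_of_type (S-{a,b}) d1 (d2-1)) = c"
  shows "card {p \<in> perms_of_type S d1 d2. p a \<noteq> a} = (card S - 1) * c"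
proof -
  have eq: "{p \<in> perms_of_type S d1 d2. p a \<noteq> a} = (\<Union>b\<in>S-{a}. {p \<in> perms_of_type S d1 d2. p a = b})"
  proof -
    have "p a \<in> S" if "p \<in> perms_of_type S d1 d2" for p
      using that a unfolding type_iff by (simp add: permutes_in_image)
    then show ?thesis by auto
  qed
  have "card (\<Union>b\<in>S-{a}. {p \<in> perms_of_type S d1 d2. p a = b}) =
        (\<Sum>b\<in>S-{a}. card {p \<in> perms_of_type S d1 d2. p a = b})"
    by (rule card_UN_disjoint) (use fin type_finite[OF fin, of d1 d2] in auto)
  also have "\<dots> = (\<Sum>b\<in>S-{a}. c)"
  proof (rule sum.cong[OF refl])
    fix b assume b: "b \<in> S - {a}"
    show "card {p \<in> perms_of_type S d1 d2. p a = b} = c"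
      using Tb_card[OF a _ _ fin d2, of b d1] b c[OF b] by auto
  qed
  also have "\<dots> = (card S - 1) * c" using fin a by simp
  finally show ?thesis using eq by simp
qed

lemma type_card:
  "finite S \<Longrightarrow> card S = d1 + 2*d2 \<Longrightarrow>
    card (perms_of_type S d1 d2) * (fact d1 * 2^d2 * fact d2) = fact (d1 + 2*d2)"
proof (induction "card S" arbitrary: S d1 d2 rule: less_induct)
  case less
  show ?case
  proof (cases "S = {}")
    case True
    then have "d1 = 0" "d2 = 0" using less by auto
    then show ?thesis using True type_empty by simp
  next
    case False
    then obtain a where a: "a \<in> S" by auto
    define N where "N = card S"
    have "card S > 0" using a less(2) card_gt_0_iff by blast
    then have N: "N = d1 + 2*d2" "N \<ge> 1" using less N_def by auto
    define T where "T = perms_of_type S d1 d2"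
    have split: "T = {p \<in> T. p a = a} \<union> {p \<in> T. p a \<noteq> a}" by auto
    have cardT: "card T = card {p \<in> T. p a = a} + card {p \<in> T. p a \<noteq> a}"
      by (subst split, rule card_Un_disjoint) (use type_finite[OF less(2)] T_def in auto)
    define D :: nat where "D = fact d1 * 2^d2 * fact d2"
    have A: "card {p \<in> T. p a = a} * D = (if d1 \<ge> 1 then fact (N-1) * d1 else 0)"
    proof (cases "d1 \<ge> 1")
      case True
      then obtain e1 where e1: "d1 = Suc e1" by (cases d1) auto
      have eq: "{p \<in> T. p a = a} = perms_of_type (S-{a}) e1 d2"
        using T0_eq[OF a less(2) True] e1 T_def by simp
      have "card (S-{a}) < card S" by (rule card_Diff1_less[OF less(2) a])
      moreover have "card (S-{a}) = e1 + 2*d2" using a less(2,3) e1 by simp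
      ultimately have ih: "card (perms_of_type (S-{a}) e1 d2) * (fact e1 * 2^d2 * fact d2) = fact (e1 + 2*d2)"
        using less(1)[of "S-{a}" e1 d2] less(2) by simp
      have "N - 1 = e1 + 2*d2" using N e1 by simp
      have "D = (fact e1 * 2^d2 * fact d2) * Suc e1" unfolding D_def e1
        by (simp only: fact_Suc of_nat_id mult_ac)
      then have "card {p \<in> T. p a = a} * D = fact (N-1) * d1"
        using eq ih \<open>N - 1 = _\<close> e1 by (simp only: mult.assoc[symmetric])
      then show ?thesis using True by simp
    next
      case False
      then have "d1 = 0" by simp
      then have "{p \<in> T. p a = a} = {}" using T0_empty[OF a less(2), of d2] T_def by simp
      then have "card {p \<in> T. p a = a} = 0" by (simp only: card.empty)
      then show ?thesis using False by simp
    qed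
    have B: "card {p \<in> T. p a \<noteq> a} * D = (if d2 \<ge> 1 then fact (N-1) * (2*d2) else 0)"
    proof (cases "d2 \<ge> 1")
      case True
      then obtain e2 where e2: "d2 = Suc e2" by (cases d2) auto
      define D' :: nat where "D' = fact d1 * 2^e2 * fact e2"
      have D'pos: "D' > 0" unfolding D'_def by simp
      define c :: nat where "c = fact (d1 + 2*e2) div D'"
      have ihb: "card (perms_of_type (S-{a,b}) d1 (d2-1)) * D' = fact (d1 + 2*e2)"
        if b: "b \<in> S - {a}" for b
      proof -
        have "card (S-{a,b}) < card S" using a b less(2) by (metis Diff_insert card_Diff2_less
            DiffD1 DiffD2 singleton_iff)
        moreover have "card (S-{a,b}) = d1 + 2*e2" using a b less(2,3) e2 by (simp add: card_Diff_subset)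
        ultimately show ?thesis
          using less(1)[of "S-{a,b}" d1 e2] less(2) e2 unfolding D'_def by simp
      qed
      have cb: "card (perms_of_type (S-{a,b}) d1 (d2-1)) = c" if b: "b \<in> S - {a}" for b
        unfolding c_def using ihb[OF b] D'pos by (metis nonzero_mult_div_cancel_right less_not_refl2)
      have ct: "card {p \<in> T. p a \<noteq> a} = (N - 1) * c"
        using T1_card[OF less(2) a True cb] T_def N_def by simp
      have "card (S - {a}) = N - 1" using a less(2) N_def by simp
      then have "card (S - {a}) \<noteq> 0" using N e2 by simp
      then have "S - {a} \<noteq> {}" by (metis card.empty)
      then obtain b0 where b0: "b0 \<in> S - {a}" by blast
      have cD: "c * D' = fact (d1 + 2*e2)" using ihb[OF b0] cb[OF b0] by simp
      have "N - 1 = Suc (d1 + 2*e2)" using N e2 by simp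
      then have f: "fact (N-1) = Suc (d1 + 2*e2) * fact (d1 + 2*e2)" by simp
      have "D = D' * (2 * d2)" unfolding D_def D'_def e2 by (simp add: algebra_simps)
      then have "card {p \<in> T. p a \<noteq> a} * D = (N-1) * (c * D') * (2*d2)" using ct by simp
      also have "\<dots> = fact (N-1) * (2*d2)" using cD f \<open>N - 1 = _\<close> by simp
      finally show ?thesis using True by simp
    next
      case False
      then have "d2 = 0" by simp
      then have "{p \<in> T. p a \<noteq> a} = {}" using T1_empty[OF a less(2), of d1] T_def by simp
      then have "card {p \<in> T. p a \<noteq> a} = 0" by (simp only: card.empty)
      then show ?thesis using False by simp
    qed
    have "card T * D = fact (N-1) * (d1 + 2*d2)"
      using A B cardT by (simp add: algebra_simps split: if_splits)
    also have "\<dots> = fact N"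
    proof -
      have "fact N = N * fact (N - 1)" using fact_reduce[of N, where 'a=nat] N(2) by simp
      then show ?thesis using N(1) by (simp only: mult.commute)
    qed
    finally show ?thesis using N T_def D_def by simp
  qed
qed



lemma pp_type:
  assumes "distinct L" "set L = S"
  shows "pp L \<in> perms_of_type S (if odd (length L) then 1 else 0) (length L div 2)"
proof -
  have fx: "{x\<in>S. pp L x = x} = (if odd (length L) then {last L} else {})"
    using pp_fix[OF assms(1)] assms(2) by simp
  have "{x\<in>S. pp L x \<noteq> x} = S - {x\<in>S. pp L x = x}" by auto
  moreover have "card S = length L" using assms distinct_card by blast
  moreover have "last L \<in> S" if "odd (length L)" using that assms(2)
    by (metis last_in_set list.size(3) odd_pos less_numeral_extra(3))
  ultimately have "card {x\<in>S. pp L x \<noteq> x} = length L - (if odd (length L) then 1 else 0)"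
    using fx assms by (auto simp: card_Diff_subset)
  also have "\<dots> = 2 * (length L div 2)" by auto
  finally show ?thesis unfolding type_iff using fx pp_permutes[OF assms(1)] pp_invol[OF assms(1)]
    assms(2) by auto
qed

lemma pp_tl_type:
  assumes "distinct L" "set L = S" "L \<noteq> []"
  shows "pp (tl L) \<in> perms_of_type S (if even (length L) then 2 else 1) ((length L - 1) div 2)"
proof -
  obtain x r where L: "L = x # r" using assms(3) by (cases L) auto
  have d: "distinct r" "x \<notin> set r" using assms(1) L by auto
  have S: "S = insert x (set r)" using assms(2) L by auto
  have fr: "{z\<in>set r. pp r z = z} = (if odd (length r) then {last r} else {})" by (rule pp_fix[OF d(1)])
  have px: "pp r x = x" using pp_out[OF d(2)] .
  have "{z\<in>S. pp r z = z} = insert x {z\<in>set r. pp r z = z}"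
    unfolding S using px by blast
  then have fx: "{z\<in>S. pp r z = z} = insert x (if odd (length r) then {last r} else {})"
    using fr by simp
  have lr: "last r \<in> set r" "last r \<noteq> x" if "odd (length r)" using that d(2)
    by (metis last_in_set list.size(3) odd_pos less_numeral_extra(3))+
  have cfx: "card {z\<in>S. pp r z = z} = (if odd (length r) then 2 else 1)"
    using fx lr by auto
  have nfx: "{z\<in>S. pp r z \<noteq> z} = set r - {z\<in>set r. pp r z = z}" unfolding S using px by blast
  have "card (set r) = length r" using d distinct_card by blast
  then have "card {z\<in>S. pp r z \<noteq> z} = length r - (if odd (length r) then 1 else 0)"
    unfolding nfx fr using lr by (auto simp: card_Diff_subset)
  also have "\<dots> = 2 * ((length L - 1) div 2)" using L by auto
  finally have c2: "card {z\<in>S. pp r z \<noteq> z} = 2 * ((length L - 1) div 2)" .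
  have pr: "pp r permutes S" using pp_permutes[OF d(1)] S permutes_subset by blast
  have "length L - 1 = length r" "even (length L) \<longleftrightarrow> odd (length r)" using L by auto
  then have cfx': "card {z\<in>S. pp r z = z} = (if even (length L) then 2 else 1)" using cfx by simp
  have "tl L = r" using L by simp
  then show ?thesis unfolding type_iff using pr cfx' c2 pp_invol[OF d(1)] by simp
qed

lemma pp_eqI:
  fixes x :: "nat \<Rightarrow> nat"
  assumes inj: "inj_on x {..<l}" and out: "\<And>z. z \<notin> x ` {..<l} \<Longrightarrow> u z = z"
    and on: "\<And>k. k < l \<Longrightarrow> u (x k) = (if even k then (if Suc k < l then x (Suc k) else x k) else x (k-1))"
  shows "u = pp (map x [0..<l])"
proof
  fix z
  have d: "distinct (map x [0..<l])" using inj by (simp add: distinct_map atLeast0LessThan)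
  show "u z = pp (map x [0..<l]) z"
  proof (cases "z \<in> x ` {..<l}")
    case True
    then obtain k where k: "k < l" "z = x k" by auto
    have "pp (map x [0..<l]) (map x [0..<l] ! k) = u (x k)"
      using pp_nth[OF d, of k] k on[OF k(1)] by auto
    then show ?thesis using k by simp
  next
    case False
    then have "z \<notin> set (map x [0..<l])" by auto
    then show ?thesis using out[OF False] pp_out by simp
  qed
qed

lemma walk_list:
  assumes "\<And>k. Suc k < length L \<Longrightarrow> (if even k then a else b) (L!k) = L!(Suc k)" "L \<noteq> []"
  shows "map (walk a b (hd L)) [0..<length L] = L"
proof -
  have "k < length L \<Longrightarrow> walk a b (hd L) k = L!k" for k
  proof (induction k)
    case 0 then show ?case using assms(2) by (simp add: hd_conv_nth)
  next
    case (Suc k)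
    then have "walk a b (hd L) k = L!k" by simp
    then have "walk a b (hd L) (Suc k) = (if even k then a else b) (L!k)" by simp
    then show ?case using assms(1)[of k] Suc.prems by simp
  qed
  then show ?thesis by (intro nth_equalityI) auto
qed

lemma map_walk_set:
  assumes "map (walk a b x0) [0..<n] = L"
  shows "set L \<subseteq> range (walk a b x0)"
  using assms by auto



lemma tl_map_upt: "tl (map x [0..<n]) = map (\<lambda>i. x (Suc i)) [0..<n-1]"
  by (rule nth_equalityI) (auto simp: nth_tl)

lemma inj_Suc_shift: assumes "inj_on x {..<n}" shows "inj_on (\<lambda>i. x (Suc i)) {..<n-1}"
proof (rule inj_onI)
  fix i j assume "i \<in> {..<n-1}" "j \<in> {..<n-1}" "x (Suc i) = x (Suc j)"
  moreover have "Suc i \<in> {..<n}" "Suc j \<in> {..<n}" using \<open>i \<in> _\<close> \<open>j \<in> _\<close> by auto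
  ultimately have "Suc i = Suc j" using inj_onD[OF assms] by blast
  then show "i = j" by simp
qed

lemma image_shift: "x ` {..<n} = S \<Longrightarrow> n \<ge> 1 \<Longrightarrow> S = insert (x 0) ((\<lambda>i. x (Suc i)) ` {..<n-1})"
proof -
  assume h: "x ` {..<n} = S" "n \<ge> 1"
  have "{..<n} = insert 0 (Suc ` {..<n-1})"
  proof (rule set_eqI)
    fix i show "i \<in> {..<n} \<longleftrightarrow> i \<in> insert 0 (Suc ` {..<n-1})"
      using h(2) by (cases i) auto
  qed
  then show ?thesis using h(1) by (simp add: image_image)
qed

lemma fixed_single:
  assumes "finite S" "card {z\<in>S. s z = z} = 1" "y \<in> S" "s y = y"
  shows "{z\<in>S. s z = z} = {y}"
proof -
  obtain w where "{z\<in>S. s z = z} = {w}" using assms(2) card_1_singletonE by blast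
  then show ?thesis using assms(3,4) by auto
qed

theorem count1:
  assumes fin: "finite S" and cS: "card S = 2*m+1"
  shows "card {(s,t). s \<in> perms_of_type S 1 m \<and> t \<in> perms_of_type S 1 m \<and> transitive_on S s t}
         = fact (2*m+1)"
proof -
  define n where "n = 2*m+1"
  define A where "A = perms_of_type S 1 m"
  define T where "T = {(s,t). s \<in> A \<and> t \<in> A \<and> transitive_on S s t}"
  define Ls where "Ls = {L. set L = S \<and> distinct L}"
  define \<phi> where "\<phi> L = (pp (tl L), pp L)" for L
  define \<psi> where "\<psi> p = map (walk (snd p) (fst p) (Min {z\<in>S. fst p z = z})) [0..<n]" for p
  have i: "\<psi> (\<phi> L) = L" if L: "L \<in> Ls" for L
  proof -
    have d: "distinct L" "set L = S" using L Ls_def by auto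
    have len: "length L = n" using d distinct_card cS n_def by metis
    then have ne: "L \<noteq> []" using n_def by auto
    have ty: "pp (tl L) \<in> perms_of_type S 1 m" using pp_tl_type[OF d ne] len n_def by simp
    have hdS: "hd L \<in> S" using ne d by auto
    have hdf: "pp (tl L) (hd L) = hd L"
      using d(1) ne by (intro pp_out) (cases L, auto)
    have "{z\<in>S. pp (tl L) z = z} = {hd L}"
      by (rule fixed_single[of S "pp (tl L)" "hd L", OF fin _ hdS hdf]) (use ty in \<open>simp add: type_iff\<close>)
    then have mn: "Min {z\<in>S. pp (tl L) z = z} = hd L" by simp
    have step: "(if even k then pp L else pp (tl L)) (L!k) = L!(Suc k)" if k: "Suc k < length L" for k
    proof (cases "even k")
      case True then show ?thesis using pp_nth[OF d(1), of k] k by simp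
    next
      case False
      then obtain k' where k': "k = Suc k'" by (cases k) auto
      have dt: "distinct (tl L)" using d(1) by (simp add: distinct_tl)
      have lt: "Suc k' < length (tl L)" "k' < length (tl L)" using k k' by auto
      have "pp (tl L) (tl L ! k') = tl L ! Suc k'" using pp_nth[OF dt lt(2)] lt(1) k' False by simp
      then show ?thesis using False k' nth_tl[OF lt(1)] nth_tl[OF lt(2)] by simp
    qed
    have "map (walk (pp L) (pp (tl L)) (hd L)) [0..<length L] = L" by (rule walk_list[OF step ne])
    then show ?thesis unfolding \<psi>_def \<phi>_def using mn len by simp
  qed
  have iii: "\<phi> L \<in> T" if L: "L \<in> Ls" for L
  proof -
    have d: "distinct L" "set L = S" using L Ls_def by auto
    have len: "length L = n" using d distinct_card cS n_def by metis
    then have ne: "L \<noteq> []" using n_def by auto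
    have ty1: "pp (tl L) \<in> A" using pp_tl_type[OF d ne] len n_def A_def by simp
    have ty2: "pp L \<in> A" using pp_type[OF d] len n_def A_def by simp
    have w: "\<psi> (\<phi> L) = L" by (rule i[OF L])
    have "map (walk (pp L) (pp (tl L)) (Min {z\<in>S. pp (tl L) z = z})) [0..<n] = L"
      using w unfolding \<psi>_def \<phi>_def by simp
    then have "S \<subseteq> range (walk (pp L) (pp (tl L)) (Min {z\<in>S. pp (tl L) z = z}))"
      using map_walk_set d(2) by metis
    then have "transitive_on S (pp (tl L)) (pp L)"
      by (rule transitive_from_walk[rotated 3]) (use d(1) pp_invol distinct_tl in auto)
    then show ?thesis unfolding T_def \<phi>_def using ty1 ty2 by simp
  qed
  have iv: "\<psi> p \<in> Ls \<and> \<phi> (\<psi> p) = p" if p: "p \<in> T" for p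
  proof -
    obtain s t where st: "p = (s,t)" by (cases p)
    have sA: "s \<in> A" and tA: "t \<in> A" and tr: "transitive_on S s t" using p st T_def by auto
    have iss: "\<And>z. s (s z) = z" and ps: "s permutes S" and cs: "card {z\<in>S. s z = z} = 1"
      using sA A_def type_iff by auto
    have it: "\<And>z. t (t z) = z" and pt: "t permutes S" using tA A_def type_iff by auto
    define x0 where "x0 = Min {z\<in>S. s z = z}"
    have "{z\<in>S. s z = z} \<noteq> {}" using cs by (metis card.empty zero_neq_one)
    then have x0: "x0 \<in> S" "s x0 = x0" unfolding x0_def using fin Min_in[of "{z\<in>S. s z = z}"] by auto
    define x where "x = walk t s x0"
    have W: "inj_on x {..<n}" "x ` {..<n} = S" "x n = x (n-1)"
      using walk_main[OF it iss pt ps fin x0(1), of s t] tr x0(2) cS n_def unfolding x_def by auto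
    have px: "\<psi> p = map x [0..<n]" unfolding \<psi>_def st x_def x0_def by simp
    have inLs: "\<psi> p \<in> Ls" unfolding px Ls_def using W by (simp add: distinct_map atLeast0LessThan)
    have fw: "x (Suc k) = (if even k then t else s) (x k)" for k unfolding x_def by simp
    have bw: "(if even k then t else s) (x (Suc k)) = x k" for k unfolding x_def using iss it by simp
    have tpp: "t = pp (map x [0..<n])"
    proof (rule pp_eqI[OF W(1)])
      fix z assume "z \<notin> x ` {..<n}" then show "t z = z" using W(2) permutes_not_in[OF pt] by simp
    next
      fix k assume k: "k < n"
      show "t (x k) = (if even k then (if Suc k < n then x (Suc k) else x k) else x (k-1))"
      proof (cases "even k")
        case True
        show ?thesis
        proof (cases "Suc k < n")
          case True then show ?thesis using fw[of k] \<open>even k\<close> by simp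
        next
          case False then have "k = n - 1" using k by simp
          then show ?thesis using fw[of k] \<open>even k\<close> W(3) n_def by simp
        qed
      next
        case False
        then obtain k' where k': "k = Suc k'" by (cases k) auto
        then show ?thesis using bw[of k'] False by simp
      qed
    qed
    have spp: "s = pp (map (\<lambda>i. x (Suc i)) [0..<n-1])"
    proof (rule pp_eqI[OF inj_Suc_shift[OF W(1)]])
      fix z assume z: "z \<notin> (\<lambda>i. x (Suc i)) ` {..<n-1}"
      have "S = insert (x 0) ((\<lambda>i. x (Suc i)) ` {..<n-1})" using image_shift[OF W(2)] n_def by simp
      then show "s z = z" using z permutes_not_in[OF ps] x0(2) unfolding x_def by (cases "z \<in> S") auto
    next
      fix k assume k: "k < n - 1"
      show "s (x (Suc k)) = (if even k then (if Suc k < n-1 then x (Suc (Suc k)) else x (Suc k)) else x (Suc (k-1)))"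
      proof (cases "even k")
        case True
        then have "Suc k < n - 1" using k n_def by presburger
        then show ?thesis using fw[of "Suc k"] True by simp
      next
        case False
        then obtain k' where k': "k = Suc k'" by (cases k) auto
        then show ?thesis using bw[of k] False by simp
      qed
    qed
    have "\<phi> (\<psi> p) = (pp (tl (map x [0..<n])), pp (map x [0..<n]))" unfolding px \<phi>_def by simp
    also have "\<dots> = (s, t)" using tpp spp by (simp add: tl_map_upt)
    finally have "\<phi> (\<psi> p) = p" using st by simp
    then show ?thesis using inLs by simp
  qed
  have "bij_betw \<phi> Ls T"
    by (rule bij_betw_byWitness[where f'=\<psi>]) (use i iii iv in auto)
  then have "card T = card Ls" by (simp add: bij_betw_same_card)
  also have "\<dots> = fact n" using card_permutations_of_set[OF fin] cS n_def
    unfolding permutations_of_set_def Ls_def by simp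
  finally show ?thesis unfolding T_def A_def n_def .
qed



lemma step_tl:
  assumes d: "distinct L" and k: "Suc k < length L"
  shows "(if even k then pp L else pp (tl L)) (L!k) = L!(Suc k)"
proof (cases "even k")
  case True then show ?thesis using pp_nth[OF d, of k] k by simp
next
  case False
  then obtain k' where k': "k = Suc k'" by (cases k) auto
  have dt: "distinct (tl L)" using d by (simp add: distinct_tl)
  have lt: "Suc k' < length (tl L)" "k' < length (tl L)" using k k' by auto
  have "pp (tl L) (tl L ! k') = tl L ! Suc k'" using pp_nth[OF dt lt(2)] lt(1) k' False by simp
  then show ?thesis using False k' nth_tl[OF lt(1)] nth_tl[OF lt(2)] by simp
qed

lemma card_hd_less_last:
  assumes fin: "finite (S::nat set)" and c: "card S \<ge> 2"
  shows "2 * card {L. set L = S \<and> distinct L \<and> hd L < last L} = fact (card S)"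
proof -
  define P where "P = {L. set L = S \<and> distinct L}"
  define A where "A = {L. set L = S \<and> distinct L \<and> hd L < last L}"
  define B where "B = {L. set L = S \<and> distinct L \<and> last L < hd L}"
  have ne: "hd L \<noteq> last L" if "L \<in> P" for L
  proof -
    have d: "set L = S" "distinct L" using that P_def by auto
    have "length L = card S" using distinct_card[OF d(2)] d(1) by simp
    then have "length L \<ge> 2" using c by simp
    then have "hd L = L!0" "last L = L!(length L - 1)" "0 \<noteq> length L - 1"
    proof -
      assume h: "length L \<ge> 2"
      then have "L \<noteq> []" by auto
      then show "hd L = L!0" "last L = L!(length L - 1)" "0 \<noteq> length L - 1"
        using h by (simp_all add: hd_conv_nth last_conv_nth)
    qed
    moreover have "0 < length L" "length L - 1 < length L" using \<open>length L \<ge> 2\<close> by auto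
    then have "L!0 = L!(length L - 1) \<longleftrightarrow> 0 = length L - 1" by (rule nth_eq_iff_index_eq[OF d(2)])
    ultimately show ?thesis by simp
  qed
  have PAB: "P = A \<union> B"
  proof (rule set_eqI)
    fix L show "L \<in> P \<longleftrightarrow> L \<in> A \<union> B"
      using ne[of L] unfolding A_def B_def P_def by (auto simp: linorder_neq_iff)
  qed
  have finP: "finite P" using finite_permutations_of_set[of S] unfolding permutations_of_set_def P_def .
  have "card P = card A + card B" unfolding PAB
    by (rule card_Un_disjoint) (use finP PAB A_def B_def in auto)
  moreover have "card A = card B"
  proof (rule bij_betw_same_card[of rev], rule bij_betw_byWitness[where f'=rev])
    have nn: "L \<noteq> []" if "L \<in> P" for L
    proof
      assume "L = []" then have "S = {}" using that P_def by simp
      then show False using c by simp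
    qed
    show "rev ` A \<subseteq> B"
    proof (rule image_subsetI)
      fix L assume "L \<in> A"
      then have "L \<in> P" "hd L < last L" unfolding A_def P_def by auto
      then show "rev L \<in> B" using nn[of L] unfolding B_def P_def by (simp add: hd_rev last_rev)
    qed
    show "rev ` B \<subseteq> A"
    proof (rule image_subsetI)
      fix L assume "L \<in> B"
      then have "L \<in> P" "last L < hd L" unfolding B_def P_def by auto
      then show "rev L \<in> A" using nn[of L] unfolding A_def P_def by (simp add: hd_rev last_rev)
    qed
  qed auto
  moreover have "card P = fact (card S)" using card_permutations_of_set[OF fin]
    unfolding permutations_of_set_def P_def .
  ultimately show ?thesis unfolding A_def by simp
qed

theorem count2:
  assumes fin: "finite S" and cS: "card S = 2*m" and m: "m \<ge> 1"
  shows "2 * card {(s,t). s \<in> perms_of_type S 2 (m-1) \<and> t \<in> perms_of_type S 0 m \<and> transitive_on S s t}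
         = fact (2*m)"
proof -
  define n where "n = 2*m"
  define A where "A = perms_of_type S 2 (m-1)"
  define B where "B = perms_of_type S 0 m"
  define T where "T = {(s,t). s \<in> A \<and> t \<in> B \<and> transitive_on S s t}"
  define Ls where "Ls = {L. set L = S \<and> distinct L \<and> hd L < last L}"
  define \<phi> where "\<phi> L = (pp (tl L), pp L)" for L
  define \<psi> where "\<psi> p = map (walk (snd p) (fst p) (Min {z\<in>S. fst p z = z})) [0..<n]" for p
  have i: "\<psi> (\<phi> L) = L" if L: "L \<in> Ls" for L
  proof -
    have d: "distinct L" "set L = S" and hl: "hd L < last L" using L Ls_def by auto
    have len: "length L = n" using d distinct_card cS n_def by metis
    then have ne: "L \<noteq> []" and ne2: "tl L \<noteq> []" using n_def m by (auto simp: length_0_conv[symmetric])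
    obtain y r where L': "L = y # r" using ne by (cases L) auto
    have dr: "distinct r" "y \<notin> set r" using d(1) L' by auto
    have "Suc (length r) = 2*m" using len L' n_def by simp
    then have odd: "odd (length r)" by presburger
    have lr: "last r = last L" using L' ne2 by simp
    have "{z\<in>S. pp r z = z} = insert y {z\<in>set r. pp r z = z}"
      using d(2) L' pp_out[OF dr(2)] by auto
    also have "\<dots> = {hd L, last L}" using pp_fix[OF dr(1)] odd lr L' by simp
    finally have "{z\<in>S. pp (tl L) z = z} = {hd L, last L}" using L' by simp
    then have mn: "Min {z\<in>S. pp (tl L) z = z} = hd L" using hl by simp
    have "map (walk (pp L) (pp (tl L)) (hd L)) [0..<length L] = L"
      by (rule walk_list[OF step_tl[OF d(1)] ne])
    then show ?thesis unfolding \<psi>_def \<phi>_def using mn len by simp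
  qed
  have iii: "\<phi> L \<in> T" if L: "L \<in> Ls" for L
  proof -
    have d: "distinct L" "set L = S" using L Ls_def by auto
    have len: "length L = n" using d distinct_card cS n_def by metis
    then have ne: "L \<noteq> []" using n_def m by auto
    have "(2*m - 1) div 2 = m - 1" using m by presburger
    then have ty1: "pp (tl L) \<in> A" using pp_tl_type[OF d ne] len n_def A_def m by simp
    have ty2: "pp L \<in> B" using pp_type[OF d] len n_def B_def by simp
    have w: "\<psi> (\<phi> L) = L" by (rule i[OF L])
    have "map (walk (pp L) (pp (tl L)) (Min {z\<in>S. pp (tl L) z = z})) [0..<n] = L"
      using w unfolding \<psi>_def \<phi>_def by simp
    then have "S \<subseteq> range (walk (pp L) (pp (tl L)) (Min {z\<in>S. pp (tl L) z = z}))"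
      using map_walk_set d(2) by metis
    then have "transitive_on S (pp (tl L)) (pp L)"
      by (rule transitive_from_walk[rotated 3]) (use d(1) pp_invol distinct_tl in auto)
    then show ?thesis unfolding T_def \<phi>_def using ty1 ty2 by simp
  qed
  have iv: "\<psi> p \<in> Ls \<and> \<phi> (\<psi> p) = p" if p: "p \<in> T" for p
  proof -
    obtain s t where st: "p = (s,t)" by (cases p)
    have sA: "s \<in> A" and tB: "t \<in> B" and tr: "transitive_on S s t" using p st T_def by auto
    have iss: "\<And>z. s (s z) = z" and ps: "s permutes S" and cs: "card {z\<in>S. s z = z} = 2"
      using sA A_def type_iff by auto
    have it: "\<And>z. t (t z) = z" and pt: "t permutes S" using tB B_def type_iff by auto
    define F where "F = {z\<in>S. s z = z}"
    have finF: "finite F" using fin F_def by auto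
    define x0 where "x0 = Min F"
    have "F \<noteq> {}" using cs F_def by (metis card.empty zero_neq_numeral)
    then have x0: "x0 \<in> S" "s x0 = x0" unfolding x0_def using finF Min_in[of F] F_def by auto
    define x where "x = walk t s x0"
    have W: "inj_on x {..<n}" "x ` {..<n} = S" "x n = x (n-1)"
      using walk_main[OF it iss pt ps fin x0(1), of s t] tr x0(2) cS n_def unfolding x_def by auto
    have px: "\<psi> p = map x [0..<n]" unfolding \<psi>_def st x_def x0_def F_def by simp
    have fw: "x (Suc k) = (if even k then t else s) (x k)" for k unfolding x_def by simp
    have bw: "(if even k then t else s) (x (Suc k)) = x k" for k unfolding x_def using iss it by simp
    have n2: "n \<ge> 2" using m n_def by simp
    have sl: "s (x (n-1)) = x (n-1)" using fw[of "n-1"] W(3) n2 n_def by (simp add: Suc_diff_1)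
    have xl: "x (n-1) \<in> F" using sl W(2) n2 F_def by auto
    have "x 0 \<noteq> x (n-1)" using inj_onD[OF W(1), of 0 "n-1"] n2 by auto
    moreover have "x 0 \<le> x (n-1)" using Min_le[OF finF xl] x0_def x_def by simp
    ultimately have hl: "x 0 < x (n-1)" by simp
    have inLs: "\<psi> p \<in> Ls" unfolding px Ls_def using W hl n2
      by (simp add: distinct_map atLeast0LessThan hd_map last_map)
    have tpp: "t = pp (map x [0..<n])"
    proof (rule pp_eqI[OF W(1)])
      fix z assume "z \<notin> x ` {..<n}" then show "t z = z" using W(2) permutes_not_in[OF pt] by simp
    next
      fix k assume k: "k < n"
      show "t (x k) = (if even k then (if Suc k < n then x (Suc k) else x k) else x (k-1))"
      proof (cases "even k")
        case True
        then have "Suc k < n" using k n_def by presburger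
        then show ?thesis using fw[of k] True by simp
      next
        case False
        then obtain k' where k': "k = Suc k'" by (cases k) auto
        then show ?thesis using bw[of k'] False by simp
      qed
    qed
    have spp: "s = pp (map (\<lambda>i. x (Suc i)) [0..<n-1])"
    proof (rule pp_eqI[OF inj_Suc_shift[OF W(1)]])
      fix z assume z: "z \<notin> (\<lambda>i. x (Suc i)) ` {..<n-1}"
      have "S = insert (x 0) ((\<lambda>i. x (Suc i)) ` {..<n-1})" using image_shift[OF W(2)] n2 by simp
      then show "s z = z" using z permutes_not_in[OF ps] x0(2) unfolding x_def by (cases "z \<in> S") auto
    next
      fix k assume k: "k < n - 1"
      show "s (x (Suc k)) = (if even k then (if Suc k < n-1 then x (Suc (Suc k)) else x (Suc k)) else x (Suc (k-1)))"
      proof (cases "even k")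
        case True
        show ?thesis
        proof (cases "Suc k < n - 1")
          case True then show ?thesis using fw[of "Suc k"] \<open>even k\<close> by simp
        next
          case False then have "Suc k = n - 1" using k by simp
          then show ?thesis using sl \<open>even k\<close> by simp
        qed
      next
        case False
        then obtain k' where k': "k = Suc k'" by (cases k) auto
        then show ?thesis using bw[of k] False by simp
      qed
    qed
    have "\<phi> (\<psi> p) = (pp (tl (map x [0..<n])), pp (map x [0..<n]))" unfolding px \<phi>_def by simp
    also have "\<dots> = (s, t)" using tpp spp by (simp add: tl_map_upt)
    finally have "\<phi> (\<psi> p) = p" using st by simp
    then show ?thesis using inLs by simp
  qed
  have "bij_betw \<phi> Ls T"
    by (rule bij_betw_byWitness[where f'=\<psi>]) (use i iii iv in auto)
  then have "card T = card Ls" by (simp add: bij_betw_same_card)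
  moreover have "2 * card Ls = fact n" using card_hd_less_last[OF fin] cS m n_def Ls_def by simp
  ultimately show ?thesis unfolding T_def A_def B_def n_def by simp
qed



lemma card_hd_fixed:
  assumes fin: "finite (S::nat set)" and a: "a \<in> S"
  shows "card {L. set L = S \<and> distinct L \<and> hd L = a} = fact (card S - 1)"
proof -
  have "bij_betw (\<lambda>L. a # L) {L. set L = S - {a} \<and> distinct L} {L. set L = S \<and> distinct L \<and> hd L = a}"
  proof (rule bij_betw_byWitness[where f'=tl])
    show "(#) a ` {L. set L = S - {a} \<and> distinct L} \<subseteq> {L. set L = S \<and> distinct L \<and> hd L = a}"
    proof (rule image_subsetI)
      fix L assume "L \<in> {L. set L = S - {a} \<and> distinct L}"
      then have "set L = S - {a}" "distinct L" by auto
      then show "a # L \<in> {L. set L = S \<and> distinct L \<and> hd L = a}" using a by auto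
    qed
    show "\<forall>L\<in>{L. set L = S - {a} \<and> distinct L}. tl (a # L) = L" by simp
    show "tl ` {L. set L = S \<and> distinct L \<and> hd L = a} \<subseteq> {L. set L = S - {a} \<and> distinct L}"
    proof (rule image_subsetI)
      fix L assume L: "L \<in> {L. set L = S \<and> distinct L \<and> hd L = a}"
      then have "L \<noteq> []" using a by auto
      then obtain r where "L = a # r" using L by (cases L) auto
      then show "tl L \<in> {L. set L = S - {a} \<and> distinct L}" using L by auto
    qed
    show "\<forall>L\<in>{L. set L = S \<and> distinct L \<and> hd L = a}. a # tl L = L"
    proof
      fix L assume L: "L \<in> {L. set L = S \<and> distinct L \<and> hd L = a}"
      then have "L \<noteq> []" using a by auto
      then show "a # tl L = L" using L by auto
    qed
  qed
  then have "card {L. set L = S \<and> distinct L \<and> hd L = a} = card {L. set L = S - {a} \<and> distinct L}"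
    by (simp add: bij_betw_same_card)
  also have "\<dots> = fact (card (S - {a}))" using card_permutations_of_set[of "S - {a}"] fin
    unfolding permutations_of_set_def by simp
  finally show ?thesis using fin a by simp
qed

lemma distinct_rot: "distinct L \<Longrightarrow> L \<noteq> [] \<Longrightarrow> distinct (tl L @ [hd L])"
  by (cases L) auto

theorem count3:
  assumes fin: "finite S" and cS: "card S = 2*m" and m: "m \<ge> 1"
  shows "card {(s,t). s \<in> perms_of_type S 0 m \<and> t \<in> perms_of_type S 0 m \<and> transitive_on S s t}
         = fact (2*m - 1)"
proof -
  define n where "n = 2*m"
  define B where "B = perms_of_type S 0 m"
  define T where "T = {(s,t). s \<in> B \<and> t \<in> B \<and> transitive_on S s t}"
  define a where "a = Min S"
  have Sne: "S \<noteq> {}" using cS m by auto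
  have aS: "a \<in> S" using Min_in[OF fin Sne] a_def by simp
  define Ls where "Ls = {L. set L = S \<and> distinct L \<and> hd L = a}"
  define \<phi> where "\<phi> L = (pp L, pp (tl L @ [hd L]))" for L
  define \<psi> where "\<psi> p = map (walk (fst p) (snd p) a) [0..<n]" for p
  have i: "\<psi> (\<phi> L) = L" if L: "L \<in> Ls" for L
  proof -
    have d: "distinct L" "set L = S" and ha: "hd L = a" using L Ls_def by auto
    have len: "length L = n" using d distinct_card cS n_def by metis
    then have ne: "L \<noteq> []" using n_def m by auto
    define M where "M = tl L @ [hd L]"
    have dM: "distinct M" using distinct_rot[OF d(1) ne] M_def by simp
    have lenM: "length M = n" using len ne M_def by (cases L) auto
    have Mk: "M ! k = L ! Suc k" if "Suc k < n" for k
    proof -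
      have "k < length (tl L)" using that len by simp
      then show ?thesis unfolding M_def by (simp add: nth_append nth_tl)
    qed
    have step: "(if even k then pp L else pp M) (L!k) = L!(Suc k)" if k: "Suc k < length L" for k
    proof (cases "even k")
      case True then show ?thesis using pp_nth[OF d(1), of k] k by simp
    next
      case False
      then obtain k' where k': "k = Suc k'" by (cases k) auto
      have "pp M (M ! k') = M ! Suc k'" using pp_nth[OF dM, of k'] k k' False lenM len by simp
      moreover have "M ! k' = L ! k" using Mk[of k'] k k' len by simp
      moreover have "M ! Suc k' = L ! Suc k" using Mk[of "Suc k'"] k k' len False n_def
        by (simp add: Suc_lessI)
      ultimately show ?thesis using False by simp
    qed
    have "map (walk (pp L) (pp M) (hd L)) [0..<length L] = L" by (rule walk_list[OF step ne])
    then show ?thesis unfolding \<psi>_def \<phi>_def M_def using ha len by simp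
  qed
  have iii: "\<phi> L \<in> T" if L: "L \<in> Ls" for L
  proof -
    have d: "distinct L" "set L = S" and ha: "hd L = a" using L Ls_def by auto
    have len: "length L = n" using d distinct_card cS n_def by metis
    then have ne: "L \<noteq> []" using n_def m by auto
    define M where "M = tl L @ [hd L]"
    have dM: "distinct M" using distinct_rot[OF d(1) ne] M_def by simp
    have lenM: "length M = n" using len ne M_def by (cases L) auto
    have sM: "set M = S" using d(2) ne unfolding M_def by (cases L) auto
    have ty1: "pp L \<in> B" using pp_type[OF d] len n_def B_def by simp
    have ty2: "pp M \<in> B" using pp_type[OF dM sM] lenM n_def B_def by simp
    have "map (walk (pp L) (pp M) a) [0..<n] = L" using i[OF L] unfolding \<psi>_def \<phi>_def M_def by simp
    then have "S \<subseteq> range (walk (pp L) (pp M) a)" using map_walk_set d(2) by metis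
    then have "transitive_on S (pp L) (pp M)"
      by (rule transitive_from_walk[rotated 3]) (use d(1) dM pp_invol in auto)
    then show ?thesis unfolding T_def \<phi>_def M_def[symmetric] using ty1 ty2 by simp
  qed
  have iv: "\<psi> p \<in> Ls \<and> \<phi> (\<psi> p) = p" if p: "p \<in> T" for p
  proof -
    obtain s t where st: "p = (s,t)" by (cases p)
    have sB: "s \<in> B" and tB: "t \<in> B" and tr: "transitive_on S s t" using p st T_def by auto
    have iss: "\<And>z. s (s z) = z" and ps: "s permutes S" and cs: "card {z\<in>S. s z = z} = 0"
      using sB B_def type_iff by auto
    have it: "\<And>z. t (t z) = z" and pt: "t permutes S" and ct: "card {z\<in>S. t z = z} = 0"
      using tB B_def type_iff by auto
    have nofix: "\<forall>z\<in>S. s z \<noteq> z \<and> t z \<noteq> z"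
    proof -
      have "{z\<in>S. s z = z} = {}" "{z\<in>S. t z = z} = {}" using cs ct fin by auto
      then show ?thesis by blast
    qed
    define x where "x = walk s t a"
    have W: "inj_on x {..<n}" "x ` {..<n} = S" "x n = a \<and> even n"
      using walk_main[OF iss it ps pt fin aS, of s t] tr nofix cS n_def unfolding x_def by auto
    have x0: "x 0 = a" unfolding x_def by simp
    have px: "\<psi> p = map x [0..<n]" unfolding \<psi>_def st x_def by simp
    have n2: "n \<ge> 2" using m n_def by simp
    have fw: "x (Suc k) = (if even k then s else t) (x k)" for k unfolding x_def by simp
    have bw: "(if even k then s else t) (x (Suc k)) = x k" for k unfolding x_def using iss it by simp
    have inLs: "\<psi> p \<in> Ls" unfolding px Ls_def using W x0 n2
      by (simp add: distinct_map atLeast0LessThan hd_map)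
    have spp: "s = pp (map x [0..<n])"
    proof (rule pp_eqI[OF W(1)])
      fix z assume "z \<notin> x ` {..<n}" then show "s z = z" using W(2) permutes_not_in[OF ps] by simp
    next
      fix k assume k: "k < n"
      show "s (x k) = (if even k then (if Suc k < n then x (Suc k) else x k) else x (k-1))"
      proof (cases "even k")
        case True
        then have "Suc k < n" using k n_def by presburger
        then show ?thesis using fw[of k] True by simp
      next
        case False
        then obtain k' where k': "k = Suc k'" by (cases k) auto
        then show ?thesis using bw[of k'] False by simp
      qed
    qed
    define y where "y i = x (Suc i)" for i
    define g where "g k = (if k = n - 1 then 0 else Suc k)" for k
    have yg: "y k = x (g k)" "g k < n" if "k < n" for k
    proof -
      show "g k < n" using that n2 unfolding g_def by auto
      show "y k = x (g k)"
      proof (cases "k = n - 1")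
        case True
        then have "Suc k = n" using n2 by simp
        then show ?thesis using W(3) x0 True unfolding y_def g_def by simp
      qed (simp add: y_def g_def)
    qed
    have injy: "inj_on y {..<n}"
    proof (rule inj_onI)
      fix i j assume ij: "i \<in> {..<n}" "j \<in> {..<n}" "y i = y j"
      then have "x (g i) = x (g j)" using yg by simp
      then have "g i = g j" using inj_onD[OF W(1)] yg ij by simp
      then show "i = j" using ij unfolding g_def by (auto split: if_splits)
    qed
    have imy: "y ` {..<n} = S"
    proof
      show "y ` {..<n} \<subseteq> S" using yg W(2) by auto
      show "S \<subseteq> y ` {..<n}"
      proof
        fix z assume "z \<in> S"
        then obtain k where k: "k < n" "z = x k" using W(2) by auto
        show "z \<in> y ` {..<n}"
        proof (cases k)
          case 0
          then have "z = y (n - 1)" using k yg[of "n-1"] n2 unfolding g_def by simp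
          then show ?thesis using n2 by auto
        next
          case (Suc k')
          then have "z = y k'" using k unfolding y_def by simp
          then show ?thesis using Suc k by auto
        qed
      qed
    qed
    have tpp: "t = pp (map y [0..<n])"
    proof (rule pp_eqI[OF injy])
      fix z assume "z \<notin> y ` {..<n}" then show "t z = z" using imy permutes_not_in[OF pt] by simp
    next
      fix k assume k: "k < n"
      show "t (y k) = (if even k then (if Suc k < n then y (Suc k) else y k) else y (k-1))"
      proof (cases "even k")
        case True
        then have "Suc k < n" using k n_def by presburger
        then show ?thesis using fw[of "Suc k"] True unfolding y_def by simp
      next
        case False
        then obtain k' where k': "k = Suc k'" by (cases k) auto
        then show ?thesis using bw[of k] False unfolding y_def by simp
      qed
    qed
    have rot: "tl (map x [0..<n]) @ [hd (map x [0..<n])] = map y [0..<n]"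
    proof (rule nth_equalityI)
      show "length (tl (map x [0..<n]) @ [hd (map x [0..<n])]) = length (map y [0..<n])" using n2 by simp
      fix i assume "i < length (tl (map x [0..<n]) @ [hd (map x [0..<n])])"
      then have i: "i < n" using n2 by simp
      show "(tl (map x [0..<n]) @ [hd (map x [0..<n])]) ! i = map y [0..<n] ! i"
      proof (cases "i = n - 1")
        case True then show ?thesis using W(3) x0 n2 i unfolding y_def
          by (simp add: nth_append hd_map Suc_diff_1)
      next
        case False
        then have "i < n - 1" using i by simp
        then show ?thesis using i n2 unfolding y_def by (simp add: nth_append nth_tl)
      qed
    qed
    have "\<phi> (\<psi> p) = (s, t)" unfolding px \<phi>_def using spp tpp rot by simp
    then show ?thesis using inLs st by simp
  qed
  have "bij_betw \<phi> Ls T"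
    by (rule bij_betw_byWitness[where f'=\<psi>]) (use i iii iv in auto)
  then have "card T = card Ls" by (simp add: bij_betw_same_card)
  also have "\<dots> = fact (n - 1)" using card_hd_fixed[OF fin aS] cS n_def Ls_def by simp
  finally show ?thesis unfolding T_def B_def n_def .
qed



lemma card_real:
  assumes "finite S" "card S = d1 + 2*d2"
  shows "real (card (perms_of_type S d1 d2)) = fact (d1 + 2*d2) / (fact d1 * 2^d2 * fact d2)"
proof -
  have "card (perms_of_type S d1 d2) * (fact d1 * 2^d2 * fact d2) = fact (d1 + 2*d2)"
    by (rule type_card[OF assms])
  then have "real (card (perms_of_type S d1 d2)) * (fact d1 * 2^d2 * fact d2) = fact (d1 + 2*d2)"
    by (metis (mono_tags) of_nat_fact of_nat_mult of_nat_numeral of_nat_power)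
  moreover have "(fact d1 * 2^d2 * fact d2 :: real) \<noteq> 0" by simp
  ultimately show ?thesis by (simp add: field_simps)
qed

theorem mainTheorem2:
  fixes m :: nat
  shows "trans_prob {1..2*m+1} (perms_of_type {1..2*m+1} 1 m) (perms_of_type {1..2*m+1} 1 m)
           = fact (2*m+1) / (fact (2*m+1) / (2^m * fact m))^2
       \<and> (m \<ge> 1 \<longrightarrow>
         trans_prob {1..2*m} (perms_of_type {1..2*m} 2 (m-1)) (perms_of_type {1..2*m} 0 m)
           = (fact (2*m) / 2) /
             ((fact (2*m) / (2^(m-1) * fact 2 * fact (m-1))) * (fact (2*m) / (2^m * fact m))))
       \<and> (m \<ge> 1 \<longrightarrow>
         trans_prob {1..2*m} (perms_of_type {1..2*m} 0 m) (perms_of_type {1..2*m} 0 m)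
           = fact (2*m-1) / (fact (2*m) / (2^m * fact m))^2)"
proof (intro conjI impI)
  let ?S = "{1..2*m+1::nat}"
  have cS: "card ?S = 1 + 2*m" by simp
  have e: "1 + 2*m = 2*m+1" by simp
  have fS: "finite ?S" by simp
  have "real (card (perms_of_type ?S 1 m)) = fact (1 + 2*m) / (fact 1 * 2^m * fact m)"
    by (rule card_real[OF fS cS])
  moreover have "(fact 1 :: real) * 2^m * fact m = 2^m * fact m" by simp
  ultimately have c1: "real (card (perms_of_type ?S 1 m)) = fact (2*m+1) / (2^m * fact m)"
    unfolding e by (simp only:)
  have n1: "real (card {(s,t). s \<in> perms_of_type ?S 1 m \<and> t \<in> perms_of_type ?S 1 m \<and> transitive_on ?S s t})
     = fact (2*m+1)"
  proof -
    have "card {(s,t). s \<in> perms_of_type ?S 1 m \<and> t \<in> perms_of_type ?S 1 m \<and> transitive_on ?S s t}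
       = fact (2*m+1)" by (rule count1[OF fS]) simp
    then show ?thesis by (simp only: of_nat_fact)
  qed
  show "trans_prob ?S (perms_of_type ?S 1 m) (perms_of_type ?S 1 m)
           = fact (2*m+1) / (fact (2*m+1) / (2^m * fact m))^2"
    unfolding trans_prob_def card_cartesian_product using c1 n1 by (simp add: power2_eq_square)
next
  assume m: "m \<ge> 1"
  let ?S = "{1..2*m::nat}"
  have cS: "card ?S = 2 + 2*(m-1)" using m by simp
  have e: "2 + 2*(m-1) = 2*m" using m by simp
  have fS: "finite ?S" by simp
  have "real (card (perms_of_type ?S 2 (m-1))) = fact (2 + 2*(m-1)) / (fact 2 * 2^(m-1) * fact (m-1))"
    by (rule card_real[OF fS cS])
  moreover have "(fact 2 :: real) * 2^(m-1) * fact (m-1) = 2^(m-1) * fact 2 * fact (m-1)" by (simp only: mult_ac)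
  ultimately have c2: "real (card (perms_of_type ?S 2 (m-1))) = fact (2*m) / (2^(m-1) * fact 2 * fact (m-1))"
    unfolding e by (simp only:)
  have cS0: "card ?S = 0 + 2*m" by simp
  have "real (card (perms_of_type ?S 0 m)) = fact (0 + 2*m) / (fact 0 * 2^m * fact m)"
    by (rule card_real[OF _ cS0]) simp
  moreover have "(fact 0 :: real) * 2^m * fact m = 2^m * fact m" by simp
  ultimately have c0: "real (card (perms_of_type ?S 0 m)) = fact (2*m) / (2^m * fact m)"
    by (simp only: add_0)
  have "2 * card {(s,t). s \<in> perms_of_type ?S 2 (m-1) \<and> t \<in> perms_of_type ?S 0 m \<and> transitive_on ?S s t}
     = fact (2*m)" by (rule count2[OF _ _ m]) simp_all
  then have n2: "real (card {(s,t). s \<in> perms_of_type ?S 2 (m-1) \<and> t \<in> perms_of_type ?S 0 m \<and> transitive_on ?S s t})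
     = fact (2*m) / 2"
    by (metis (mono_tags) of_nat_fact of_nat_mult of_nat_numeral nonzero_mult_div_cancel_left
        zero_neq_numeral)
  show "trans_prob ?S (perms_of_type ?S 2 (m-1)) (perms_of_type ?S 0 m)
           = (fact (2*m) / 2) /
             ((fact (2*m) / (2^(m-1) * fact 2 * fact (m-1))) * (fact (2*m) / (2^m * fact m)))"
    unfolding trans_prob_def card_cartesian_product of_nat_mult c2 c0 n2 ..
next
  assume m: "m \<ge> 1"
  let ?S = "{1..2*m::nat}"
  have cS0: "card ?S = 0 + 2*m" by simp
  have "real (card (perms_of_type ?S 0 m)) = fact (0 + 2*m) / (fact 0 * 2^m * fact m)"
    by (rule card_real[OF _ cS0]) simp
  moreover have "(fact 0 :: real) * 2^m * fact m = 2^m * fact m" by simp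
  ultimately have c0: "real (card (perms_of_type ?S 0 m)) = fact (2*m) / (2^m * fact m)"
    by (simp only: add_0)
  have n3: "real (card {(s,t). s \<in> perms_of_type ?S 0 m \<and> t \<in> perms_of_type ?S 0 m \<and> transitive_on ?S s t})
     = fact (2*m-1)"
  proof -
    have "card {(s,t). s \<in> perms_of_type ?S 0 m \<and> t \<in> perms_of_type ?S 0 m \<and> transitive_on ?S s t}
       = fact (2*m-1)" by (rule count3[OF _ _ m]) simp_all
    then show ?thesis by (simp only: of_nat_fact)
  qed
  show "trans_prob ?S (perms_of_type ?S 0 m) (perms_of_type ?S 0 m)
           = fact (2*m-1) / (fact (2*m) / (2^m * fact m))^2"
    unfolding trans_prob_def card_cartesian_product of_nat_mult using c0 n3 by (simp add: power2_eq_square)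
qed


end
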